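(* Let $E_{\mathcal H}>1$ be a fixed real number. Each of the following kernels satisfies assumptions (K0), (K1), (K2), (K3): (a) the Gaussian kernel $K(x)=e^{-x^2/2}/\sqrt{2\pi}$; (b) the rectangular kernel $K(x)=\mathbf 1_{[-1,1]}(x)/2$; (c) the Epanechnikov kernel $K(x)=(3/4)(1-x^2)\mathbf 1_{[-1,1]}(x)$; (d) the biweight kernel $K(x)=(15/16)(1-x^2)^2\mathbf 1_{[-1,1]}(x)$.
   Context: $\|\cdot\|$ and $\langle\cdot,\cdot\rangle$ denote the $L^2(\mathbb R)$ norm and inner product with respect to Lebesgue measure; $K(x\,\cdot)$ denotes $u\mapsto K(xu)$. For $x>0$ define $\phi(x)=1+\frac1x-2\frac{\langle K,K(x\,\cdot)\rangle}{\|K\|^2}$ (equivalently $\phi(x)=\|K\|^{-2}\|K-K_x\|^2$ with $K_x=K(\cdot/x)/x$). The assumptions are: (K0) $\int|K|=1$, $\|K\|<\infty$, and $\langle K,K(x\,\cdot)\rangle/\|K\|^2\ge1$ for all $0\le x\le1$; (K1) the function $\phi$ is bounded from below over $[E_{\mathcal H},+\infty)$; (K2) for every $0<\mu<1$, the function $x\mapsto\phi(x)-\mu/x$ tends to $+\infty$ as $x\to0$ and is decreasing in some neighborhood of $0$; (K3) for every $0<\mu<1$, the function $x\mapsto\phi(x)+\mu/x$ is increasing on $[2,\infty)$. *)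

theory Defs
  imports "HOL-Analysis.Analysis"
begin

definition L2_inner :: "(real \<Rightarrow> real) \<Rightarrow> (real \<Rightarrow> real) \<Rightarrow> real" where
  "L2_inner f g = (\<integral>u. f u * g u \<partial>lborel)"

definition L2_normsq :: "(real \<Rightarrow> real) \<Rightarrow> real" where
  "L2_normsq f = (\<integral>u. (f u)\<^sup>2 \<partial>lborel)"

definition kphi :: "(real \<Rightarrow> real) \<Rightarrow> real \<Rightarrow> real" where
  "kphi K x = 1 + 1 / x - 2 * L2_inner K (\<lambda>u. K (x * u)) / L2_normsq K"

definition K0 :: "(real \<Rightarrow> real) \<Rightarrow> bool" where
  "K0 K \<longleftrightarrow> integrable lborel K \<and> (\<integral>u. \<bar>K u\<bar> \<partial>lborel) = 1
      \<and> integrable lborel (\<lambda>u. (K u)\<^sup>2)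
      \<and> (\<forall>x. 0 \<le> x \<and> x \<le> 1 \<longrightarrow> L2_inner K (\<lambda>u. K (x * u)) / L2_normsq K \<ge> 1)"

definition K1 :: "real \<Rightarrow> (real \<Rightarrow> real) \<Rightarrow> bool" where
  "K1 EH K \<longleftrightarrow> (\<exists>B. \<forall>x\<ge>EH. B \<le> kphi K x)"

definition K2 :: "(real \<Rightarrow> real) \<Rightarrow> bool" where
  "K2 K \<longleftrightarrow> (\<forall>\<mu>. 0 < \<mu> \<and> \<mu> < 1 \<longrightarrow>
      filterlim (\<lambda>x. kphi K x - \<mu> / x) at_top (at_right 0)
      \<and> (\<exists>\<delta>>0. antimono_on {0<..<\<delta>} (\<lambda>x. kphi K x - \<mu> / x)))"

definition K3 :: "(real \<Rightarrow> real) \<Rightarrow> bool" where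
  "K3 K \<longleftrightarrow> (\<forall>\<mu>. 0 < \<mu> \<and> \<mu> < 1 \<longrightarrow> mono_on {2..} (\<lambda>x. kphi K x + \<mu> / x))"

definition kernel_assumptions :: "real \<Rightarrow> (real \<Rightarrow> real) \<Rightarrow> bool" where
  "kernel_assumptions EH K \<longleftrightarrow> K0 K \<and> K1 EH K \<and> K2 K \<and> K3 K"

end

theory Submission
  imports Defs "HOL-Probability.Probability"
begin

section \<open>Generic reduction\<close>

lemma generic:
  fixes K r :: "real \<Rightarrow> real" and EH B B0 :: real
  assumes EH: "EH > 1"
  and i1: "integrable lborel K" and i2: "(\<integral>u. \<bar>K u\<bar> \<partial>lborel) = 1"
  and i3: "integrable lborel (\<lambda>u. (K u)\<^sup>2)"
  and r: "\<And>x. 0 \<le> x \<Longrightarrow> L2_inner K (\<lambda>u. K (x*u)) / L2_normsq K = r x"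
  and r1: "\<And>x. 0 \<le> x \<Longrightarrow> x \<le> 1 \<Longrightarrow> 1 \<le> r x"
  and rB: "\<And>x. 1 \<le> x \<Longrightarrow> r x \<le> B"
  and rB0: "\<And>x. 0 < x \<Longrightarrow> x \<le> 1 \<Longrightarrow> r x \<le> B0"
  and dec: "\<And>\<mu>. 0<\<mu> \<Longrightarrow> \<mu><1 \<Longrightarrow> \<exists>\<delta>>0. antimono_on {0<..<\<delta>} (\<lambda>x. (1-\<mu>)/x - 2*r x)"
  and inc: "\<And>\<mu>. 0<\<mu> \<Longrightarrow> \<mu><1 \<Longrightarrow> mono_on {2..} (\<lambda>x. (1+\<mu>)/x - 2*r x)"
  shows "kernel_assumptions EH K"
proof -
  have kp: "kphi K x = 1 + 1/x - 2 * r x" if "0 \<le> x" for x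
    using r[OF that] unfolding kphi_def by (simp add: mult_divide_mult_cancel_left)
  have kp2: "kphi K x - \<mu>/x = 1 + ((1-\<mu>)/x - 2 * r x)" if "0 \<le> x" for x \<mu>
    using kp[OF that] by (simp add: diff_divide_distrib)
  have kp3: "kphi K x + \<mu>/x = 1 + ((1+\<mu>)/x - 2 * r x)" if "0 \<le> x" for x \<mu>
    using kp[OF that] by (simp add: add_divide_distrib)
  have "K0 K" unfolding K0_def using i1 i2 i3 r r1 by auto
  moreover have "K1 EH K" unfolding K1_def
  proof (intro exI allI impI)
    fix x assume "EH \<le> x"
    hence x: "x \<ge> 1" using EH by simp
    show "1 - 2*B \<le> kphi K x" using kp[of x] x rB[OF x] by (smt (verit) divide_nonneg_nonneg)
  qed
  moreover have "K2 K" unfolding K2_def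
  proof (intro allI impI conjI)
    fix \<mu> :: real assume m: "0 < \<mu> \<and> \<mu> < 1"
    have l0: "filterlim (\<lambda>x. (1-\<mu>) * inverse x) at_top (at_right (0::real))"
      by (rule filterlim_tendsto_pos_mult_at_top[OF tendsto_const]) (use m filterlim_inverse_at_top_right in auto)
    have l1: "filterlim (\<lambda>x. (1 - 2*B0) + (1-\<mu>) * inverse x) at_top (at_right (0::real))"
      by (rule filterlim_tendsto_add_at_top[OF tendsto_const l0])
    have ev: "eventually (\<lambda>x. (1 - 2*B0) + (1-\<mu>) * inverse x \<le> kphi K x - \<mu>/x) (at_right (0::real))"
      unfolding eventually_at_right_field
    proof (intro exI[of _ 1] conjI allI impI)
      fix x :: real assume "0 < x" "x < 1"
      then show "(1 - 2*B0) + (1-\<mu>) * inverse x \<le> kphi K x - \<mu>/x"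
        using kp2[of x \<mu>] rB0[of x] by (simp add: divide_inverse)
    qed simp
    show "filterlim (\<lambda>x. kphi K x - \<mu> / x) at_top (at_right 0)"
      by (rule filterlim_at_top_mono[OF l1 ev])
    obtain \<delta> where d: "\<delta> > 0" "antimono_on {0<..<\<delta>} (\<lambda>x. (1-\<mu>)/x - 2*r x)"
      using dec m by blast
    show "\<exists>\<delta>>0. antimono_on {0<..<\<delta>} (\<lambda>x. kphi K x - \<mu> / x)"
    proof (intro exI conjI)
      show "antimono_on {0<..<\<delta>} (\<lambda>x. kphi K x - \<mu> / x)"
        using d(2) unfolding monotone_on_def by (auto simp: kp2)
    qed (rule d(1))
  qed
  moreover have "K3 K" unfolding K3_def
  proof (intro allI impI)
    fix \<mu> :: real assume m: "0 < \<mu> \<and> \<mu> < 1"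
    show "mono_on {2..} (\<lambda>x. kphi K x + \<mu> / x)"
      using inc[of \<mu>] m unfolding monotone_on_def by (auto simp: kp3)
  qed
  ultimately show ?thesis unfolding kernel_assumptions_def by blast
qed

lemma normsq_inner: "L2_normsq K = L2_inner K (\<lambda>u. K (1*u))"
  unfolding L2_normsq_def L2_inner_def by (simp add: power2_eq_square)

lemma anti_deriv:
  fixes f g d :: "real \<Rightarrow> real" and \<delta> :: real
  assumes "\<And>x. 0<x \<Longrightarrow> x<\<delta> \<Longrightarrow> DERIV g x :> d x" "\<And>x. 0<x \<Longrightarrow> x<\<delta> \<Longrightarrow> d x \<le> 0"
    "\<And>x. 0<x \<Longrightarrow> x<\<delta> \<Longrightarrow> f x = g x"
  shows "antimono_on {0<..<\<delta>} f"
  unfolding monotone_on_def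
proof (intro ballI impI)
  fix x y assume xy: "x \<in> {0<..<\<delta>}" "y \<in> {0<..<\<delta>}" "x \<le> y"
  have "g y \<le> g x"
  proof (rule DERIV_nonpos_imp_nonincreasing[OF xy(3)])
    fix t assume "x \<le> t" "t \<le> y"
    then show "\<exists>y. DERIV g t :> y \<and> y \<le> 0" using xy assms(1,2)[of t] by auto
  qed
  then show "f x \<ge> f y" using xy assms(3) by auto
qed

lemma mono_deriv:
  fixes f g d :: "real \<Rightarrow> real"
  assumes "\<And>x. 2\<le>x \<Longrightarrow> DERIV g x :> d x" "\<And>x. 2\<le>x \<Longrightarrow> d x \<ge> 0"
    "\<And>x. 2\<le>x \<Longrightarrow> f x = g x"
  shows "mono_on {2..} f"
  unfolding monotone_on_def
proof (intro ballI impI)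
  fix x y :: real assume xy: "x \<in> {2..}" "y \<in> {2..}" "x \<le> y"
  have "g x \<le> g y"
  proof (rule DERIV_nonneg_imp_nondecreasing[OF xy(3)])
    fix t assume "x \<le> t" "t \<le> y"
    then show "\<exists>y. DERIV g t :> y \<and> y \<ge> 0" using xy assms(1,2)[of t] by auto
  qed
  then show "f x \<le> f y" using xy assms(3) by auto
qed


lemma D_mon: fixes a x :: real shows "DERIV (\<lambda>x. a * x ^ n) x :> a * (real n * x ^ (n - Suc 0))"
  by (rule DERIV_cmult[OF DERIV_pow])

lemma D_inv: fixes a x :: real assumes "x \<noteq> 0" shows "DERIV (\<lambda>x. a / x ^ n) x :> (0 * x^n - a * (real n * x ^ (n - Suc 0))) / (x^n * x^n)"
  by (rule DERIV_divide[OF DERIV_const DERIV_pow]) (use assms in simp)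

lemma sq_le1: fixes x :: real shows "0 \<le> x \<Longrightarrow> x \<le> 1 \<Longrightarrow> x^2 \<le> 1"
  by (simp add: power_le_one)

lemma sq_ge4: fixes x :: real shows "2 \<le> x \<Longrightarrow> 4 \<le> x^2"
  using power_mono[of 2 x 2] by simp

lemma cube_le: fixes x :: real shows "0 \<le> x \<Longrightarrow> x \<le> 1 \<Longrightarrow> x * x^2 \<le> x"
  using mult_left_mono[OF sq_le1] by fastforce

section \<open>Compactly supported kernels\<close>

lemma ind_prod1: fixes x u :: real shows "0 \<le> x \<Longrightarrow> x \<le> 1 \<Longrightarrow> indicator {-1..1} u * indicator {-1..1} (x*u) = (indicator {-1..1} u :: real)"
proof (cases "u \<in> {-1..1}")
  case True
  assume "0 \<le> x" "x \<le> 1"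
  then have "\<bar>x*u\<bar> \<le> 1" using True by (auto simp: abs_mult intro!: mult_le_one)
  then show ?thesis using True by (auto simp: indicator_def abs_le_iff)
qed (auto simp: indicator_def)

lemma ind_prod2: fixes x u :: real shows "1 \<le> x \<Longrightarrow> indicator {-1..1} u * indicator {-1..1} (x*u) = (indicator {-1/x..1/x} u :: real)"
proof -
  assume x: "1 \<le> x"
  have xp: "0 < x" using x by simp
  have a1: "(-1/x \<le> u) = (-1 \<le> u*x)" by (rule pos_divide_le_eq[OF xp])
  have a2: "(u \<le> 1/x) = (u*x \<le> 1)" by (rule pos_le_divide_eq[OF xp])
  have a: "(x*u \<in> {-1..1}) = (u \<in> {-1/x..1/x})" using a1 a2 by (simp add: mult.commute)
  have i1: "1/x \<le> 1" using x by simp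
  have b: "u \<in> {-1/x..1/x} \<Longrightarrow> u \<in> {-1..1}" using i1 by auto
  show ?thesis using a b by (auto simp: indicator_def)
qed

lemma inner1: fixes x :: real and p :: "real \<Rightarrow> real" shows "0 \<le> x \<Longrightarrow> x \<le> 1 \<Longrightarrow> L2_inner (\<lambda>u. p u * indicator {-1..1} u) (\<lambda>u. p (x*u) * indicator {-1..1} (x*u)) = (\<integral>u. p u * p (x*u) * indicator {-1..1} u \<partial>lborel)"
  unfolding L2_inner_def
proof (rule Bochner_Integration.integral_cong[OF refl])
  fix u assume "0 \<le> x" "x \<le> 1"
  have "p u * indicator {-1..1} u * (p (x*u) * indicator {-1..1} (x*u)) = p u * p (x*u) * (indicator {-1..1} u * indicator {-1..1} (x*u))"
    by (simp add: ac_simps)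
  then show "p u * indicator {-1..1} u * (p (x*u) * indicator {-1..1} (x*u)) = p u * p (x*u) * indicator {-1..1} u"
    using ind_prod1[OF \<open>0 \<le> x\<close> \<open>x \<le> 1\<close>] by simp
qed

lemma inner2: fixes x :: real and p :: "real \<Rightarrow> real" shows "1 \<le> x \<Longrightarrow> L2_inner (\<lambda>u. p u * indicator {-1..1} u) (\<lambda>u. p (x*u) * indicator {-1..1} (x*u)) = (\<integral>u. p u * p (x*u) * indicator {-1/x..1/x} u \<partial>lborel)"
  unfolding L2_inner_def
proof (rule Bochner_Integration.integral_cong[OF refl])
  fix u assume "1 \<le> x"
  have "p u * indicator {-1..1} u * (p (x*u) * indicator {-1..1} (x*u)) = p u * p (x*u) * (indicator {-1..1} u * indicator {-1..1} (x*u))"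
    by (simp add: ac_simps)
  then show "p u * indicator {-1..1} u * (p (x*u) * indicator {-1..1} (x*u)) = p u * p (x*u) * indicator {-1/x..1/x} u"
    using ind_prod2[OF \<open>1 \<le> x\<close>] by simp
qed

lemma compact_kernel:
  fixes p Ga Gb r :: "real \<Rightarrow> real" and EH B Bz :: real
  assumes EH: "EH > 1"
  and cont: "continuous_on UNIV p" and nn: "\<And>u. -1 \<le> u \<Longrightarrow> u \<le> 1 \<Longrightarrow> p u \<ge> 0"
  and int1: "(\<integral>u. p u * indicator {-1..1} u \<partial>lborel) = 1"
  and g1: "\<And>x. 0 \<le> x \<Longrightarrow> x \<le> 1 \<Longrightarrow> (\<integral>u. p u * p (x*u) * indicator {-1..1} u \<partial>lborel) = Ga x"
  and g2: "\<And>x. 1 \<le> x \<Longrightarrow> (\<integral>u. p u * p (x*u) * indicator {-1/x..1/x} u \<partial>lborel) = Gb x"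
  and rdef: "\<And>x. 0 \<le> x \<Longrightarrow> r x = (if x \<le> 1 then Ga x / Ga 1 else Gb x / Ga 1)"
  and r1: "\<And>x. 0 \<le> x \<Longrightarrow> x \<le> 1 \<Longrightarrow> 1 \<le> r x"
  and rB: "\<And>x. 1 \<le> x \<Longrightarrow> r x \<le> B"
  and rBz: "\<And>x. 0 < x \<Longrightarrow> x \<le> 1 \<Longrightarrow> r x \<le> Bz"
  and dec: "\<And>\<mu>. 0<\<mu> \<Longrightarrow> \<mu><1 \<Longrightarrow> \<exists>\<delta>>0. antimono_on {0<..<\<delta>} (\<lambda>x. (1-\<mu>)/x - 2*r x)"
  and inc: "\<And>\<mu>. 0<\<mu> \<Longrightarrow> \<mu><1 \<Longrightarrow> mono_on {2..} (\<lambda>x. (1+\<mu>)/x - 2*r x)"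
  shows "kernel_assumptions EH (\<lambda>u. p u * indicator {-1..1} u)"
proof (rule generic[OF EH _ _ _ _ r1 rB rBz dec inc])
  have c: "continuous_on {-1..1} p" using cont continuous_on_subset by blast
  have "integrable lborel (\<lambda>u. indicator {-1..1} u *\<^sub>R p u)"
    by (rule borel_integrable_compact[OF compact_Icc c])
  then show "integrable lborel (\<lambda>u. p u * indicator {-1..1} u)" by (simp add: mult.commute)
  have c2: "continuous_on {-1..1} (\<lambda>u. (p u)\<^sup>2)" using c by (intro continuous_intros)
  have "integrable lborel (\<lambda>u. indicator {-1..1} u *\<^sub>R (p u)\<^sup>2)"
    by (rule borel_integrable_compact[OF compact_Icc c2])
  moreover have "(\<lambda>u. indicator {-1..1} u *\<^sub>R (p u)\<^sup>2) = (\<lambda>u. (p u * indicator {-1..1} u)\<^sup>2)"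
    by (auto simp: indicator_def)
  ultimately show "integrable lborel (\<lambda>u. (p u * indicator {-1..1} u)\<^sup>2)" by simp
  have "(\<lambda>u. \<bar>p u * indicator {-1..1} u\<bar>) = (\<lambda>u. p u * indicator {-1..1} u)"
    using nn by (auto simp: indicator_def)
  then show "(\<integral>u. \<bar>p u * indicator {-1..1} u\<bar> \<partial>lborel) = 1" using int1 by simp
  fix x :: real assume x: "0 \<le> x"
  have ns: "L2_normsq (\<lambda>u. p u * indicator {-1..1} u) = Ga 1"
    unfolding normsq_inner using inner1[of 1 p] g1[of 1] by simp
  show "L2_inner (\<lambda>u. p u * indicator {-1..1} u) (\<lambda>u. p (x*u) * indicator {-1..1} (x*u)) /
        L2_normsq (\<lambda>u. p u * indicator {-1..1} u) = r x"
  proof (cases "x \<le> 1")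
    case True
    then show ?thesis using inner1[OF x True, of p] g1[OF x True] rdef[OF x] ns by simp
  next
    case False
    then show ?thesis using inner2[of x p] g2[of x] rdef[OF x] ns by simp
  qed
qed



lemma epa_int: "(\<integral>u. (3/4) * (1 - u\<^sup>2) * indicator {-1..1} u \<partial>lborel) = (1::real)"
proof (subst integral_FTC_Icc_real[where F="\<lambda>u. (3/4)*u - (1/4)*u^3"])
  fix u :: real show "DERIV (\<lambda>u. (3/4)*u - (1/4)*u^3) u :> (3/4) * (1 - u\<^sup>2)"
    apply (rule DERIV_cong) apply (rule derivative_intros)+
    by (simp add: field_simps power2_eq_square)
qed (auto intro!: continuous_intros)

lemma epa_deriv: fixes x u :: real shows "DERIV (\<lambda>u. 9/16*u - (3/16*(1+x\<^sup>2))*u^3 + (9/80*x\<^sup>2)*u^5) u :> (3/4) * (1 - u\<^sup>2) * ((3/4) * (1 - (x*u)\<^sup>2))"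
  apply (rule DERIV_cong)
   apply (rule derivative_intros)+
  apply (simp add: field_simps power2_eq_square eval_nat_numeral)
  done

lemma epa_g1: fixes x :: real shows "(\<integral>u. (3/4) * (1 - u\<^sup>2) * ((3/4) * (1 - (x*u)\<^sup>2)) * indicator {-1..1} u \<partial>lborel) = 3/4 - 3*x\<^sup>2/20"
  by (subst integral_FTC_Icc_real[OF _ epa_deriv]) (auto intro!: continuous_intros simp: field_simps)

lemma epa_g2: fixes x :: real assumes "x \<ge> 1" shows "(\<integral>u. (3/4) * (1 - u\<^sup>2) * ((3/4) * (1 - (x*u)\<^sup>2)) * indicator {-1/x..1/x} u \<partial>lborel) = 3/(4*x) - 3/(20*x^3)"
proof -
  have x: "x > 0" using assms by simp
  have le: "-1/x \<le> 1/x" using x by (simp add: divide_le_eq)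
  show ?thesis
    apply (subst integral_FTC_Icc_real[OF le epa_deriv])
    using x by (auto intro!: continuous_intros simp: field_simps eval_nat_numeral)
qed



lemma epa_kernel:
  fixes EH :: real assumes EH: "EH > 1"
  shows "kernel_assumptions EH (\<lambda>x. (3/4) * (1 - x\<^sup>2) * indicator {-1..1} x)"
proof -
  define r :: "real \<Rightarrow> real" where "r x = (if x \<le> 1 then 5/4 - x\<^sup>2/4 else 5/(4*x) - 1/(4*x^3))" for x
  have dec: "\<exists>\<delta>>0. antimono_on {0<..<\<delta>} (\<lambda>x. (1-\<mu>)/x - 2*r x)" if m: "0<\<mu>" "\<mu><1" for \<mu> :: real
  proof (intro exI conjI)
    show "0 < 1 - \<mu>" using m by simp
    show "antimono_on {0<..<1-\<mu>} (\<lambda>x. (1-\<mu>)/x - 2*r x)"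
    proof (rule anti_deriv[where g="\<lambda>x. (1-\<mu>)/x^1 - 5/2 + (1/2)*x^2" and d="\<lambda>x. -(1-\<mu>)/x^2 + x"])
      fix x :: real assume x: "0 < x" "x < 1-\<mu>"
      then have xn: "x \<noteq> 0" by simp
      show "DERIV (\<lambda>x. (1-\<mu>)/x^1 - 5/2 + (1/2)*x^2) x :> -(1-\<mu>)/x^2 + x"
        apply (rule DERIV_cong)
         apply (rule DERIV_add DERIV_diff D_inv[OF xn] D_mon DERIV_const)+
        using xn by (simp add: field_simps eval_nat_numeral)
      have "x * x^2 \<le> x" using cube_le[of x] x m by simp
      then have "x * x^2 \<le> 1-\<mu>" using x by linarith
      then have "x \<le> (1-\<mu>)/x^2" using x by (simp add: pos_le_divide_eq)
      moreover have "-(1-\<mu>)/x^2 = -((1-\<mu>)/x^2)" by (simp only: minus_divide_left)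
      ultimately show "-(1-\<mu>)/x^2 + x \<le> 0" by linarith
      show "(1-\<mu>)/x - 2*r x = (1-\<mu>)/x^1 - 5/2 + (1/2)*x^2" using x m by (simp add: r_def)
    qed
  qed
  have inc: "mono_on {2..} (\<lambda>x. (1+\<mu>)/x - 2*r x)" if m: "0<\<mu>" "\<mu><1" for \<mu> :: real
  proof (rule mono_deriv[where g="\<lambda>x. (1+\<mu>-5/2)/x^1 + (1/2)/x^3" and d="\<lambda>x. ((3/2 - \<mu>)*x\<^sup>2 - 3/2)/x^4"])
    fix x :: real assume x: "2 \<le> x"
    then have xn: "x \<noteq> 0" by simp
    show "DERIV (\<lambda>x. (1+\<mu>-5/2)/x^1 + (1/2)/x^3) x :> ((3/2 - \<mu>)*x\<^sup>2 - 3/2)/x^4"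
      apply (rule DERIV_cong)
       apply (rule DERIV_add DERIV_diff D_inv[OF xn] D_mon DERIV_const)+
      using xn by (simp add: field_simps eval_nat_numeral)
    have "4 \<le> x^2" using sq_ge4[OF x] .
    then have "(3/2 - \<mu>)*x\<^sup>2 \<ge> (1/2) * x^2" using m by (intro mult_right_mono) auto
    then have "(3/2 - \<mu>)*x\<^sup>2 - 3/2 \<ge> 0" using \<open>4 \<le> x^2\<close> by simp
    then show "((3/2 - \<mu>)*x\<^sup>2 - 3/2)/x^4 \<ge> 0" by simp
    show "(1+\<mu>)/x - 2*r x = (1+\<mu>-5/2)/x^1 + (1/2)/x^3" using x xn by (simp add: r_def field_simps)
  qed
  show ?thesis
  proof (rule compact_kernel[where p="\<lambda>u. (3/4)*(1-u\<^sup>2)" and Ga="\<lambda>x. 3/4 - 3*x\<^sup>2/20"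
        and Gb="\<lambda>x. 3/(4*x) - 3/(20*x^3)" and r=r and B=2 and Bz=2, OF EH])
    show "continuous_on UNIV (\<lambda>u::real. (3/4)*(1-u\<^sup>2))" by (intro continuous_intros)
    show "\<And>u::real. -1 \<le> u \<Longrightarrow> u \<le> 1 \<Longrightarrow> 0 \<le> (3/4)*(1-u\<^sup>2)"
      by (simp add: abs_le_iff abs_square_le_1)
    show "(\<integral>u. (3/4)*(1-u\<^sup>2) * indicator {-1..1} u \<partial>lborel) = (1::real)" by (rule epa_int)
    show "\<And>x::real. 0 \<le> x \<Longrightarrow> x \<le> 1 \<Longrightarrow> (\<integral>u. (3/4)*(1-u\<^sup>2) * ((3/4)*(1-(x*u)\<^sup>2)) * indicator {-1..1} u \<partial>lborel) = 3/4 - 3*x\<^sup>2/20"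
      by (rule epa_g1)
    show "\<And>x::real. 1 \<le> x \<Longrightarrow> (\<integral>u. (3/4)*(1-u\<^sup>2) * ((3/4)*(1-(x*u)\<^sup>2)) * indicator {-1/x..1/x} u \<partial>lborel) = 3/(4*x) - 3/(20*x^3)"
      by (rule epa_g2)
    show "\<And>x::real. 0 \<le> x \<Longrightarrow> r x = (if x \<le> 1 then (3/4 - 3*x\<^sup>2/20) / (3/4 - 3*1\<^sup>2/20) else (3/(4*x) - 3/(20*x^3)) / (3/4 - 3*1\<^sup>2/20))"
      by (auto simp: r_def field_simps)
    show "\<And>x::real. 0 \<le> x \<Longrightarrow> x \<le> 1 \<Longrightarrow> 1 \<le> r x" by (frule (1) sq_le1) (auto simp: r_def)
    show "\<And>x::real. 1 \<le> x \<Longrightarrow> r x \<le> 2"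
    proof -
      fix x :: real assume x: "1 \<le> x"
      have "5/(4*x) \<le> 5/4" using x by (simp add: divide_le_eq)
      moreover have "0 \<le> 1/(4*x^3)" using x by simp
      moreover have "r x = 5/(4*x) - 1/(4*x^3) \<or> r x = 1" using x by (cases "x \<le> 1") (auto simp: r_def)
      ultimately show "r x \<le> 2" by linarith
    qed
    show "\<And>x::real. 0 < x \<Longrightarrow> x \<le> 1 \<Longrightarrow> r x \<le> 2"
    proof -
      fix x :: real assume "0 < x" "x \<le> 1"
      have "0 \<le> x^2" by simp
      moreover have "r x = 5/4 - x^2/4" using \<open>x \<le> 1\<close> by (simp add: r_def)
      ultimately show "r x \<le> 2" by linarith
    qed
  qed (use dec inc in auto)
qed



lemma rect_kernel:
  fixes EH :: real assumes EH: "EH > 1"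
  shows "kernel_assumptions EH (\<lambda>x. indicator {-1..1} x / 2)"
proof -
  define r :: "real \<Rightarrow> real" where "r x = (if x \<le> 1 then 1 else 1/x)" for x
  have dec: "\<exists>\<delta>>0. antimono_on {0<..<\<delta>} (\<lambda>x. (1-\<mu>)/x - 2*r x)" if m: "0<\<mu>" "\<mu><1" for \<mu> :: real
  proof (intro exI conjI)
    show "(0::real) < 1" by simp
    show "antimono_on {0<..<1} (\<lambda>x. (1-\<mu>)/x - 2*r x)"
    proof (rule anti_deriv[where g="\<lambda>x. (1-\<mu>)/x^1 - 2" and d="\<lambda>x. -(1-\<mu>)/x^2"])
      fix x :: real assume x: "0 < x" "x < 1"
      then have xn: "x \<noteq> 0" by simp
      show "DERIV (\<lambda>x. (1-\<mu>)/x^1 - 2) x :> -(1-\<mu>)/x^2"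
        apply (rule DERIV_cong)
         apply (rule DERIV_add DERIV_diff D_inv[OF xn] D_mon DERIV_const)+
        using xn by (simp add: field_simps eval_nat_numeral)
      show "-(1-\<mu>)/x^2 \<le> 0" using m by (simp add: divide_nonpos_nonneg)
      show "(1-\<mu>)/x - 2*r x = (1-\<mu>)/x^1 - 2" using x m by (simp add: r_def)
    qed
  qed
  have inc: "mono_on {2..} (\<lambda>x. (1+\<mu>)/x - 2*r x)" if m: "0<\<mu>" "\<mu><1" for \<mu> :: real
  proof (rule mono_deriv[where g="\<lambda>x. (\<mu>-1)/x^1" and d="\<lambda>x. (1-\<mu>)/x^2"])
    fix x :: real assume x: "2 \<le> x"
    then have xn: "x \<noteq> 0" by simp
    show "DERIV (\<lambda>x. (\<mu>-1)/x^1) x :> (1-\<mu>)/x^2"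
      apply (rule DERIV_cong)
       apply (rule DERIV_add DERIV_diff D_inv[OF xn] D_mon DERIV_const)+
      using xn by (simp add: field_simps eval_nat_numeral)
    show "(1-\<mu>)/x^2 \<ge> 0" using m by simp
    show "(1+\<mu>)/x - 2*r x = (\<mu>-1)/x^1" using x xn by (simp add: r_def field_simps)
  qed
  have eq: "(\<lambda>x. indicator {-1..1} x / 2) = (\<lambda>x::real. (\<lambda>u. 1/2) x * indicator {-1..1} x :: real)"
    by auto
  show ?thesis unfolding eq
  proof (rule compact_kernel[where p="\<lambda>u. 1/2" and Ga="\<lambda>x. 1/2"
        and Gb="\<lambda>x. 1/(2*x)" and r=r and B=2 and Bz=2, OF EH])
    show "continuous_on UNIV (\<lambda>u::real. 1/2::real)" by (intro continuous_intros)
    show "\<And>u::real. -1 \<le> u \<Longrightarrow> u \<le> 1 \<Longrightarrow> 0 \<le> (1/2::real)" by simp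
    show "(\<integral>u. 1/2 * indicator {-1..1} (u::real) \<partial>lborel) = (1::real)"
      by (simp add: content_real_if)
    show "\<And>x::real. 0 \<le> x \<Longrightarrow> x \<le> 1 \<Longrightarrow> (\<integral>u. 1/2 * (1/2) * indicator {-1..1} (u::real) \<partial>lborel) = (1/2::real)"
      by (simp add: content_real_if)
    show "(\<integral>u. 1/2 * (1/2) * indicator {-1/x..1/x} (u::real) \<partial>lborel) = (1/(2*x)::real)" if x: "1 \<le> x" for x :: real
    proof -
      have le: "-1/x \<le> 1/x" using x by (simp add: divide_le_eq)
      show ?thesis
        using le x by (simp add: content_real_if field_simps)
    qed
    show "\<And>x::real. 0 \<le> x \<Longrightarrow> r x = (if x \<le> 1 then (1/2) / (1/2) else (1/(2*x)) / (1/2))"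
      by (auto simp: r_def field_simps)
    show "\<And>x::real. 0 \<le> x \<Longrightarrow> x \<le> 1 \<Longrightarrow> 1 \<le> r x" by (simp add: r_def)
    show "\<And>x::real. 1 \<le> x \<Longrightarrow> r x \<le> 2" by (auto simp: r_def divide_le_eq)
    show "\<And>x::real. 0 < x \<Longrightarrow> x \<le> 1 \<Longrightarrow> r x \<le> 2" by (auto simp: r_def)
  qed (use dec inc in auto)
qed



lemma biw_int: "(\<integral>u. (15/16) * (1 - u\<^sup>2)\<^sup>2 * indicator {-1..1} u \<partial>lborel) = (1::real)"
proof (subst integral_FTC_Icc_real[where F="\<lambda>u. (15/16)*u - (5/8)*u^3 + (3/16)*u^5"])
  fix u :: real show "DERIV (\<lambda>u. (15/16)*u - (5/8)*u^3 + (3/16)*u^5) u :> (15/16) * (1 - u\<^sup>2)\<^sup>2"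
    apply (rule DERIV_cong) apply (rule derivative_intros)+
    by (simp add: field_simps power2_eq_square eval_nat_numeral)
qed (auto intro!: continuous_intros)

lemma biw_deriv: fixes x u :: real shows "DERIV (\<lambda>u. 225/256*u - (225/256*(2+2*x\<^sup>2)/3)*u^3 + (225/256*(1+4*x\<^sup>2+x^4)/5)*u^5 - (225/256*(2*x\<^sup>2+2*x^4)/7)*u^7 + (225/256*x^4/9)*u^9) u :> (15/16) * (1 - u\<^sup>2)\<^sup>2 * ((15/16) * (1 - (x*u)\<^sup>2)\<^sup>2)"
  apply (rule DERIV_cong)
   apply (rule derivative_intros)+
  apply (simp add: field_simps power2_eq_square eval_nat_numeral)
  done

lemma biw_g1: fixes x :: real shows "(\<integral>u. (15/16) * (1 - u\<^sup>2)\<^sup>2 * ((15/16) * (1 - (x*u)\<^sup>2)\<^sup>2) * indicator {-1..1} u \<partial>lborel) = 15/16 - 15*x\<^sup>2/56 + 5*x^4/112"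
  by (subst integral_FTC_Icc_real[OF _ biw_deriv]) (auto intro!: continuous_intros simp: field_simps eval_nat_numeral)

lemma biw_g2: fixes x :: real assumes "x \<ge> 1" shows "(\<integral>u. (15/16) * (1 - u\<^sup>2)\<^sup>2 * ((15/16) * (1 - (x*u)\<^sup>2)\<^sup>2) * indicator {-1/x..1/x} u \<partial>lborel) = 15/(16*x) - 15/(56*x^3) + 5/(112*x^5)"
proof -
  have x: "x > 0" using assms by simp
  have le: "-1/x \<le> 1/x" using x by (simp add: divide_le_eq)
  show ?thesis
    apply (subst integral_FTC_Icc_real[OF le biw_deriv])
    using x by (auto intro!: continuous_intros simp: field_simps eval_nat_numeral)
qed



lemma biw_kernel:
  fixes EH :: real assumes EH: "EH > 1"
  shows "kernel_assumptions EH (\<lambda>x. (15/16) * (1 - x\<^sup>2)\<^sup>2 * indicator {-1..1} x)"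
proof -
  define r :: "real \<Rightarrow> real" where "r x = (if x \<le> 1 then 21/16 - 3*x\<^sup>2/8 + x^4/16 else 21/(16*x) - 3/(8*x^3) + 1/(16*x^5))" for x
  have dec: "\<exists>\<delta>>0. antimono_on {0<..<\<delta>} (\<lambda>x. (1-\<mu>)/x - 2*r x)" if m: "0<\<mu>" "\<mu><1" for \<mu> :: real
  proof (intro exI conjI)
    show "0 < (1 - \<mu>)/2" using m by simp
    show "antimono_on {0<..<(1-\<mu>)/2} (\<lambda>x. (1-\<mu>)/x - 2*r x)"
    proof (rule anti_deriv[where g="\<lambda>x. (1-\<mu>)/x^1 - 21/8 + (3/4)*x^2 - (1/8)*x^4" and d="\<lambda>x. -(1-\<mu>)/x^2 + (3/2)*x - (1/2)*x^3"])
      fix x :: real assume x: "0 < x" "x < (1-\<mu>)/2"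
      then have xn: "x \<noteq> 0" by simp
      show "DERIV (\<lambda>x. (1-\<mu>)/x^1 - 21/8 + (3/4)*x^2 - (1/8)*x^4) x :> -(1-\<mu>)/x^2 + (3/2)*x - (1/2)*x^3"
        apply (rule DERIV_cong)
         apply (rule DERIV_add DERIV_diff D_inv[OF xn] D_mon DERIV_const)+
        using xn by (simp add: field_simps eval_nat_numeral)
      have x1: "x \<le> 1" using x m by simp
      have "x * x^2 \<le> x" using cube_le[of x] x x1 by simp
      then have "x * x^2 < (1-\<mu>)/2" using x by linarith
      then have "(3/2) * (x * x^2) \<le> 1-\<mu>" using m by (simp add: field_simps)
      then have "(3/2) * x \<le> (1-\<mu>)/x^2" using x by (simp add: pos_le_divide_eq)
      moreover have "-(1-\<mu>)/x^2 = -((1-\<mu>)/x^2)" by (simp only: minus_divide_left)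
      moreover have "0 \<le> x^3" using x by simp
      ultimately show "-(1-\<mu>)/x^2 + (3/2)*x - (1/2)*x^3 \<le> 0" by linarith
      show "(1-\<mu>)/x - 2*r x = (1-\<mu>)/x^1 - 21/8 + (3/4)*x^2 - (1/8)*x^4" using x1 by (simp add: r_def)
    qed
  qed
  have inc: "mono_on {2..} (\<lambda>x. (1+\<mu>)/x - 2*r x)" if m: "0<\<mu>" "\<mu><1" for \<mu> :: real
  proof (rule mono_deriv[where g="\<lambda>x. (1+\<mu>-21/8)/x^1 + (3/4)/x^3 - (1/8)/x^5" and d="\<lambda>x. ((13/8 - \<mu>)*x^4 - (9/4)*x\<^sup>2 + 5/8)/x^6"])
    fix x :: real assume x: "2 \<le> x"
    then have xn: "x \<noteq> 0" by simp
    show "DERIV (\<lambda>x. (1+\<mu>-21/8)/x^1 + (3/4)/x^3 - (1/8)/x^5) x :> ((13/8 - \<mu>)*x^4 - (9/4)*x\<^sup>2 + 5/8)/x^6"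
      apply (rule DERIV_cong)
       apply (rule DERIV_add DERIV_diff D_inv[OF xn] D_mon DERIV_const)+
      using xn by (simp add: field_simps eval_nat_numeral)
    have t4: "4 \<le> x^2" using sq_ge4[OF x] .
    have a: "(13/8 - \<mu>)*x^4 \<ge> (5/8) * x^4" using m by (intro mult_right_mono) auto
    have "x^4 = x^2 * x^2" by (simp add: eval_nat_numeral)
    moreover have "x^2 * x^2 \<ge> 4 * x^2" using t4 by (intro mult_right_mono) auto
    ultimately have b: "x^4 \<ge> 4 * x^2" by simp
    have "(13/8 - \<mu>)*x^4 - (9/4)*x\<^sup>2 + 5/8 \<ge> 0" using a b t4 by linarith
    then show "((13/8 - \<mu>)*x^4 - (9/4)*x\<^sup>2 + 5/8)/x^6 \<ge> 0" by simp
    show "(1+\<mu>)/x - 2*r x = (1+\<mu>-21/8)/x^1 + (3/4)/x^3 - (1/8)/x^5" using x xn by (simp add: r_def field_simps)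
  qed
  show ?thesis
  proof (rule compact_kernel[where p="\<lambda>u. (15/16) * (1 - u\<^sup>2)\<^sup>2" and Ga="\<lambda>x. 15/16 - 15*x\<^sup>2/56 + 5*x^4/112"
        and Gb="\<lambda>x. 15/(16*x) - 15/(56*x^3) + 5/(112*x^5)" and r=r and B=2 and Bz=2, OF EH])
    show "continuous_on UNIV (\<lambda>u::real. (15/16) * (1 - u\<^sup>2)\<^sup>2)" by (intro continuous_intros)
    show "\<And>u::real. -1 \<le> u \<Longrightarrow> u \<le> 1 \<Longrightarrow> 0 \<le> (15/16) * (1 - u\<^sup>2)\<^sup>2" by simp
    show "(\<integral>u. (15/16) * (1 - u\<^sup>2)\<^sup>2 * indicator {-1..1} u \<partial>lborel) = (1::real)" by (rule biw_int)
    show "\<And>x::real. 0 \<le> x \<Longrightarrow> x \<le> 1 \<Longrightarrow> (\<integral>u. (15/16) * (1 - u\<^sup>2)\<^sup>2 * ((15/16) * (1 - (x*u)\<^sup>2)\<^sup>2) * indicator {-1..1} u \<partial>lborel) = 15/16 - 15*x\<^sup>2/56 + 5*x^4/112"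
      by (rule biw_g1)
    show "\<And>x::real. 1 \<le> x \<Longrightarrow> (\<integral>u. (15/16) * (1 - u\<^sup>2)\<^sup>2 * ((15/16) * (1 - (x*u)\<^sup>2)\<^sup>2) * indicator {-1/x..1/x} u \<partial>lborel) = 15/(16*x) - 15/(56*x^3) + 5/(112*x^5)"
      by (rule biw_g2)
    show "\<And>x::real. 0 \<le> x \<Longrightarrow> r x = (if x \<le> 1 then (15/16 - 15*x\<^sup>2/56 + 5*x^4/112) / (15/16 - 15*1\<^sup>2/56 + 5*1^4/112) else (15/(16*x) - 15/(56*x^3) + 5/(112*x^5)) / (15/16 - 15*1\<^sup>2/56 + 5*1^4/112))"
      by (auto simp: r_def field_simps)
    show "1 \<le> r x" if "0 \<le> x" "x \<le> 1" for x :: real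
    proof -
      have s: "x^2 \<le> 1" using sq_le1 that by blast
      have "0 \<le> (1 - x^2) * (5 - x^2)" using s by (intro mult_nonneg_nonneg) auto
      moreover have "(1 - x^2) * (5 - x^2) = 5 - 6*x^2 + x^4" by (simp add: algebra_simps eval_nat_numeral)
      moreover have "r x = 21/16 - 3*x\<^sup>2/8 + x^4/16" using that by (simp add: r_def)
      ultimately show ?thesis by linarith
    qed
    show "r x \<le> 2" if x: "1 \<le> x" for x :: real
    proof (cases "x = 1")
      case True then show ?thesis by (simp add: r_def)
    next
      case False
      have a: "21/(16*x) \<le> 21/16" using x by (simp add: divide_le_eq)
      have b: "0 \<le> 3/(8*x^3)" using x by simp
      have "1 \<le> x^5" using x by (simp add: one_le_power)
      then have c: "1/(16*x^5) \<le> 1/16" using x by (simp add: divide_le_eq)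
      have "r x = 21/(16*x) - 3/(8*x^3) + 1/(16*x^5)" using x False by (simp add: r_def)
      then show ?thesis using a b c by linarith
    qed
    show "r x \<le> 2" if x: "0 < x" "x \<le> 1" for x :: real
    proof -
      have "x^4 \<le> 1" using x by (simp add: power_le_one)
      moreover have "0 \<le> x^2" by simp
      moreover have "r x = 21/16 - 3*x\<^sup>2/8 + x^4/16" using x by (simp add: r_def)
      ultimately show ?thesis by linarith
    qed
  qed (use dec inc in auto)
qed



lemma gauss_eq: fixes c u :: real assumes c: "c > 0"
  shows "exp (-(c*u\<^sup>2)/2) = sqrt (2*pi/c) * normal_density 0 (1/sqrt c) u"
proof -
  have s: "(1/sqrt c)\<^sup>2 = 1/c" using c by (simp add: power_divide)
  have e: "-(u - 0)\<^sup>2 / (2 * (1/c)) = -(c*u\<^sup>2)/2" using c by (simp add: field_simps)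
  have p: "sqrt (2*pi/c) > 0" using c by simp
  have q: "sqrt (2*pi*(1/c)) = sqrt (2*pi/c)" by simp
  show ?thesis unfolding normal_density_def s e q using p c by simp
qed

lemma gauss_integrable: fixes c :: real assumes c: "c > 0"
  shows "integrable lborel (\<lambda>u. exp (-(c*u\<^sup>2)/2))"
proof -
  have sg: "0 < 1/sqrt c" using c by simp
  show ?thesis unfolding gauss_eq[OF c] using integrable_normal_density[OF sg] by simp
qed

lemma gauss_integral: fixes c :: real assumes c: "c > 0"
  shows "(\<integral>u. exp (-(c*u\<^sup>2)/2) \<partial>lborel) = sqrt (2*pi/c)"
proof -
  have sg: "0 < 1/sqrt c" using c by simp
  show ?thesis unfolding gauss_eq[OF c] using integral_normal_density[OF sg] by simp
qed

definition gK :: "real \<Rightarrow> real" where "gK = (\<lambda>x. exp (- (x\<^sup>2) / 2) / sqrt (2 * pi))"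

lemma gauss_prod: "gK u * gK (x*u) = exp (-((1+x\<^sup>2)*u\<^sup>2)/2) / (2*pi)"
proof -
  have "exp (- (u\<^sup>2) / 2) * exp (- ((x*u)\<^sup>2) / 2) = exp (-((1+x\<^sup>2)*u\<^sup>2)/2)"
    by (simp add: exp_add[symmetric] field_simps power_mult_distrib)
  moreover have "sqrt (2*pi) * sqrt (2*pi) = 2*pi" by simp
  ultimately show ?thesis unfolding gK_def by (simp add: field_simps)
qed

lemma gauss_inner: "L2_inner gK (\<lambda>u. gK (x*u)) = sqrt (2*pi/(1+x\<^sup>2)) / (2*pi)"
proof -
  have c: "(1+x\<^sup>2) > (0::real)" by (simp add: add_pos_nonneg)
  show ?thesis unfolding L2_inner_def gauss_prod using gauss_integral[OF c] by simp
qed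

lemma gauss_ratio: "L2_inner gK (\<lambda>u. gK (x*u)) / L2_normsq gK = sqrt 2 / sqrt (1+x\<^sup>2)"
proof -
  have c: "(1+x\<^sup>2) > (0::real)" by (simp add: add_pos_nonneg)
  have n: "L2_normsq gK = sqrt pi / (2*pi)" unfolding normsq_inner gauss_inner by simp
  have "sqrt (2*pi/(1+x\<^sup>2)) = sqrt 2 * sqrt pi / sqrt (1+x\<^sup>2)"
    by (simp add: real_sqrt_mult real_sqrt_divide)
  then show ?thesis unfolding n gauss_inner by (simp add: field_simps)
qed

lemma gauss_deriv: fixes x c :: real assumes "x > 0" shows "DERIV (\<lambda>x. c/x - 2 * (sqrt 2/sqrt(1+x\<^sup>2))) x :> - c/x\<^sup>2 + 2 * sqrt 2*x/((1+x\<^sup>2) * sqrt(1+x\<^sup>2))"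
proof -
  have s: "sqrt (1+x\<^sup>2) > 0" by (simp add: add_pos_nonneg)
  have p: "1+x\<^sup>2 > 0" by (simp add: add_pos_nonneg)
  have h3: "DERIV (\<lambda>x. sqrt(1+x\<^sup>2)) x :> x / sqrt(1+x\<^sup>2)"
    apply (rule DERIV_cong)
    apply (rule DERIV_chain2[where g="\<lambda>x. 1+x\<^sup>2", OF DERIV_real_sqrt[OF p]])
     apply (rule derivative_intros)+
    using s by (simp add: field_simps)
  show ?thesis
  apply (rule DERIV_cong)
    apply (rule DERIV_diff)
     apply (rule DERIV_divide[OF DERIV_const DERIV_ident])
    using assms apply simp
    apply (rule DERIV_cmult)
    apply (rule DERIV_divide[OF DERIV_const h3])
    using s apply simp
  using assms s p apply (simp add: field_simps power2_eq_square)
  done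
qed

lemma sqrt2_le: "sqrt 2 \<le> (3/2::real)"
  by (rule real_le_lsqrt) (auto simp: power2_eq_square)

lemma gauss_kernel:
  fixes EH :: real assumes EH: "EH > 1"
  shows "kernel_assumptions EH gK"
proof (rule generic[where r="\<lambda>x. sqrt 2 / sqrt (1+x\<^sup>2)" and B=2 and B0=2, OF EH])
  have gK1: "gK = (\<lambda>u. exp (-(1*u\<^sup>2)/2) / sqrt (2*pi))" unfolding gK_def by simp
  show "integrable lborel gK" unfolding gK1 using gauss_integrable[of 1] by simp
  have "(\<lambda>u. \<bar>gK u\<bar>) = gK" unfolding gK_def by auto
  then show "(\<integral>u. \<bar>gK u\<bar> \<partial>lborel) = 1" unfolding gK1 using gauss_integral[of 1] by simp
  have "(\<lambda>u. (gK u)\<^sup>2) = (\<lambda>u. gK u * gK (1*u))" by (simp add: power2_eq_square)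
  also have "\<dots> = (\<lambda>u. exp (-((1+1\<^sup>2)*u\<^sup>2)/2) / (2*pi))" unfolding gauss_prod by simp
  finally show "integrable lborel (\<lambda>u. (gK u)\<^sup>2)" using gauss_integrable[of "1+1\<^sup>2"] by simp
  show "\<And>x. 0 \<le> x \<Longrightarrow> L2_inner gK (\<lambda>u. gK (x*u)) / L2_normsq gK = sqrt 2 / sqrt (1+x\<^sup>2)"
    by (rule gauss_ratio)
  show "1 \<le> sqrt 2 / sqrt (1+x\<^sup>2)" if "0 \<le> x" "x \<le> 1" for x :: real
  proof -
    have "x\<^sup>2 \<le> 1" using sq_le1 that by blast
    then have "sqrt (1+x\<^sup>2) \<le> sqrt 2" by simp
    moreover have "sqrt (1+x\<^sup>2) > 0" by (simp add: add_pos_nonneg)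
    ultimately show ?thesis by (simp add: le_divide_eq)
  qed
  have bnd: "sqrt 2 / sqrt (1+x\<^sup>2) \<le> 2" for x :: real
  proof -
    have "1 \<le> sqrt (1+x\<^sup>2)" by (rule real_le_rsqrt) simp
    moreover have "0 \<le> sqrt (2::real)" by simp
    ultimately have "sqrt 2 / sqrt (1+x\<^sup>2) \<le> sqrt 2 / 1" by (intro divide_left_mono) (auto simp: add_pos_nonneg)
    then have "sqrt 2 / sqrt (1+x\<^sup>2) \<le> sqrt 2" by simp
    then show ?thesis using sqrt2_le by linarith
  qed
  show "\<And>x. 1 \<le> x \<Longrightarrow> sqrt 2 / sqrt (1+x\<^sup>2) \<le> 2" using bnd by blast
  show "\<And>x. 0 < x \<Longrightarrow> x \<le> 1 \<Longrightarrow> sqrt 2 / sqrt (1+x\<^sup>2) \<le> 2" using bnd by blast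
  show "\<exists>\<delta>>0. antimono_on {0<..<\<delta>} (\<lambda>x. (1-\<mu>)/x - 2 * (sqrt 2 / sqrt (1+x\<^sup>2)))" if m: "0<\<mu>" "\<mu><1" for \<mu> :: real
  proof (intro exI conjI)
    show "0 < (1-\<mu>)/3" using m by simp
    show "antimono_on {0<..<(1-\<mu>)/3} (\<lambda>x. (1-\<mu>)/x - 2 * (sqrt 2 / sqrt (1+x\<^sup>2)))"
    proof (rule anti_deriv[where g="\<lambda>x. (1-\<mu>)/x - 2 * (sqrt 2 / sqrt (1+x\<^sup>2))" and d="\<lambda>x. - (1-\<mu>)/x\<^sup>2 + 2 * sqrt 2*x/((1+x\<^sup>2) * sqrt(1+x\<^sup>2))"])
      fix x :: real assume x: "0 < x" "x < (1-\<mu>)/3"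
      show "DERIV (\<lambda>x. (1-\<mu>)/x - 2 * (sqrt 2 / sqrt (1+x\<^sup>2))) x :> - (1-\<mu>)/x\<^sup>2 + 2 * sqrt 2*x/((1+x\<^sup>2) * sqrt(1+x\<^sup>2))"
        by (rule gauss_deriv[OF x(1)])
      have D1: "1 \<le> (1+x\<^sup>2) * sqrt(1+x\<^sup>2)"
      proof -
        have "1 \<le> sqrt(1+x\<^sup>2)" by (rule real_le_rsqrt) simp
        moreover have "1 \<le> 1+x\<^sup>2" by simp
        ultimately show ?thesis using mult_mono[of 1 "1+x\<^sup>2" 1 "sqrt(1+x\<^sup>2)"] by simp
      qed
      have "2 * sqrt 2 * x \<le> 3 * x" using sqrt2_le x by simp
      also have "\<dots> \<le> 3 * x * ((1+x\<^sup>2) * sqrt(1+x\<^sup>2))" using D1 x by simp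
      finally have T: "2 * sqrt 2*x/((1+x\<^sup>2) * sqrt(1+x\<^sup>2)) \<le> 3 * x" using D1 by (simp add: divide_le_eq)
      have x1: "x \<le> 1" using x m by simp
      have "x * x^2 \<le> x" using cube_le[of x] x x1 by simp
      then have "x * x^2 < (1-\<mu>)/3" using x by linarith
      then have "3 * (x * x^2) \<le> 1-\<mu>" by simp
      then have "3 * x \<le> (1-\<mu>)/x^2" using x by (simp add: pos_le_divide_eq)
      moreover have "-(1-\<mu>)/x^2 = -((1-\<mu>)/x^2)" by (simp only: minus_divide_left)
      ultimately show "- (1-\<mu>)/x\<^sup>2 + 2 * sqrt 2*x/((1+x\<^sup>2) * sqrt(1+x\<^sup>2)) \<le> 0" using T by linarith
    qed simp
  qed
  show "mono_on {2..} (\<lambda>x. (1+\<mu>)/x - 2 * (sqrt 2 / sqrt (1+x\<^sup>2)))" if m: "0<\<mu>" "\<mu><1" for \<mu> :: real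
  proof (rule mono_deriv[where g="\<lambda>x. (1+\<mu>)/x - 2 * (sqrt 2 / sqrt (1+x\<^sup>2))" and d="\<lambda>x. - (1+\<mu>)/x\<^sup>2 + 2 * sqrt 2*x/((1+x\<^sup>2) * sqrt(1+x\<^sup>2))"])
    fix x :: real assume x: "2 \<le> x"
    show "DERIV (\<lambda>x. (1+\<mu>)/x - 2 * (sqrt 2 / sqrt (1+x\<^sup>2))) x :> - (1+\<mu>)/x\<^sup>2 + 2 * sqrt 2*x/((1+x\<^sup>2) * sqrt(1+x\<^sup>2))"
      by (rule gauss_deriv) (use x in simp)
    define t where "t = x\<^sup>2"
    have t4: "4 \<le> t" unfolding t_def using sq_ge4[OF x] .
    define s where "s = sqrt (1+t)"
    have s0: "0 < s" unfolding s_def using t4 by simp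
    have ss: "s\<^sup>2 = 1+t" unfolding s_def using t4 by simp
    have x3: "(x^3)\<^sup>2 = t^3" unfolding t_def by (simp add: power_mult[symmetric] power_mult_distrib mult.commute)
    have poly: "(1+t)^3 \<le> 2 * t^3"
    proof -
      have a: "t^3 \<ge> 4 * t^2" using t4 by (simp add: eval_nat_numeral mult_right_mono)
      have b: "t * t \<ge> 4 * t" using t4 by (intro mult_right_mono) auto
      have "(1+t)^3 = 1 + 3*t + 3*t^2 + t^3" by (simp add: eval_nat_numeral algebra_simps)
      moreover have "t^2 = t*t" by (simp add: power2_eq_square)
      ultimately show ?thesis using a b t4 by linarith
    qed
    have "((1+t) * s)\<^sup>2 = (1+t)^3" using ss by (simp add: power_mult_distrib eval_nat_numeral)
    also have "\<dots> \<le> 2 * t^3" by (rule poly)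
    also have "\<dots> = (sqrt 2 * x^3)\<^sup>2" using x3 by (simp add: power_mult_distrib)
    finally have key: "(1+t) * s \<le> sqrt 2 * x^3"
      by (rule power2_le_imp_le) (use x in simp)
    have D: "0 < (1+t) * s" using s0 t4 by simp
    have "2 * ((1+t) * s) \<le> 2 * sqrt 2 * x * x\<^sup>2" using key by (simp add: eval_nat_numeral algebra_simps)
    then have "2/x\<^sup>2 \<le> 2 * sqrt 2 * x / ((1+t) * s)" using D x
      by (simp add: divide_le_eq le_divide_eq mult.commute mult.left_commute)
    moreover have "(1+\<mu>)/x\<^sup>2 \<le> 2/x\<^sup>2" using m x by (simp add: divide_right_mono)
    moreover have "- (1+\<mu>)/x\<^sup>2 = - ((1+\<mu>)/x\<^sup>2)" by (simp only: minus_divide_left)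
    ultimately show "- (1+\<mu>)/x\<^sup>2 + 2 * sqrt 2*x/((1+x\<^sup>2) * sqrt(1+x\<^sup>2)) \<ge> 0"
      unfolding s_def t_def by linarith
  qed simp
qed


theorem lemma4:
  fixes EH :: real
  assumes "EH > 1"
  shows "kernel_assumptions EH (\<lambda>x. exp (- (x\<^sup>2) / 2) / sqrt (2 * pi))
    \<and> kernel_assumptions EH (\<lambda>x. indicator {-1..1} x / 2)
    \<and> kernel_assumptions EH (\<lambda>x. (3/4) * (1 - x\<^sup>2) * indicator {-1..1} x)
    \<and> kernel_assumptions EH (\<lambda>x. (15/16) * (1 - x\<^sup>2)\<^sup>2 * indicator {-1..1} x)"
  using gauss_kernel[OF assms, unfolded gK_def] rect_kernel[OF assms] epa_kernel[OF assms] biw_kernel[OF assms]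
  by blast

end
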